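(* For every $r\ge1$ and every $z\in\mathbb{C}$ with $z\ne0$, there is an algebra isomorphism $\mathcal{P}'_r(z)\cong\mathcal{P}'_r(1)$, and $\mathcal{P}'_r(1)$ is the semigroup algebra $\mathbb{C}\mathcal{P}'_r$ of the rook monoid $\mathcal{P}'_r$.
   Context: A partial permutation of $\{1,\dots,r\}$ is a bijection $d:X\to Y$ between subsets $X=\mathrm{dom}(d)$, $Y=\mathrm{im}(d)$ of $\{1,\dots,r\}$; maps are written on the right and composed by $x(d_1\circ d_2)=(xd_1)d_2$. The rook monoid $\mathcal{P}'_r$ is the monoid of all partial permutations of $\{1,\dots,r\}$ under this composition. For $z\in\mathbb{C}$, $\mathcal{P}'_r(z)$ is the algebra with basis $\mathcal{P}'_r$ and product $d_1d_2=z^{N}(d_1\circ d_2)$ with $N=r-|\mathrm{im}(d_1)\cup\mathrm{dom}(d_2)|$ (the subalgebra of the partition algebra $\mathcal{P}_r(z)$ spanned by partial permutation diagrams). *)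

theory Defs
  imports Main Complex_Main
begin

definition rook :: "nat \<Rightarrow> (nat \<rightharpoonup> nat) set" where
  "rook r = {d. dom d \<subseteq> {1..r} \<and> ran d \<subseteq> {1..r} \<and> inj_on d (dom d)}"

text \<open>Composition with maps on the right: x (d1 o d2) = (x d1) d2.\<close>
definition rcomp :: "(nat \<rightharpoonup> nat) \<Rightarrow> (nat \<rightharpoonup> nat) \<Rightarrow> (nat \<rightharpoonup> nat)" where
  "rcomp d1 d2 = d2 \<circ>\<^sub>m d1"

definition rook_N :: "nat \<Rightarrow> (nat \<rightharpoonup> nat) \<Rightarrow> (nat \<rightharpoonup> nat) \<Rightarrow> nat" where
  "rook_N r d1 d2 = r - card (ran d1 \<union> dom d2)"

text \<open>Underlying vector space of the algebras with basis rook r: complex functions on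
  the basis (vanishing off the basis).\<close>
definition rook_space :: "nat \<Rightarrow> ((nat \<rightharpoonup> nat) \<Rightarrow> complex) set" where
  "rook_space r = {a. \<forall>d. d \<notin> rook r \<longrightarrow> a d = 0}"

text \<open>Product in P'_r(z): bilinear extension of d1 d2 = z^N (d1 o d2).\<close>
definition twisted_mult :: "nat \<Rightarrow> complex \<Rightarrow> ((nat \<rightharpoonup> nat) \<Rightarrow> complex)
    \<Rightarrow> ((nat \<rightharpoonup> nat) \<Rightarrow> complex) \<Rightarrow> ((nat \<rightharpoonup> nat) \<Rightarrow> complex)" where
  "twisted_mult r z a b = (\<lambda>d. \<Sum>d1\<in>rook r. \<Sum>d2\<in>rook r.
      (if rcomp d1 d2 = d then z ^ rook_N r d1 d2 * a d1 * b d2 else 0))"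

definition rook_alg_mult :: "nat \<Rightarrow> ((nat \<rightharpoonup> nat) \<Rightarrow> complex)
    \<Rightarrow> ((nat \<rightharpoonup> nat) \<Rightarrow> complex) \<Rightarrow> ((nat \<rightharpoonup> nat) \<Rightarrow> complex)" where
  "rook_alg_mult r a b = (\<lambda>d. \<Sum>d1\<in>rook r. \<Sum>d2\<in>rook r.
      (if rcomp d1 d2 = d then a d1 * b d2 else 0))"

definition basis_elt :: "(nat \<rightharpoonup> nat) \<Rightarrow> ((nat \<rightharpoonup> nat) \<Rightarrow> complex)" where
  "basis_elt d = (\<lambda>e. if e = d then 1 else 0)"

definition rook_id :: "nat \<Rightarrow> (nat \<rightharpoonup> nat)" where
  "rook_id r = (\<lambda>x. if x \<in> {1..r} then Some x else None)"

definition twisted_alg_iso :: "nat \<Rightarrow> complex \<Rightarrow> complex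
    \<Rightarrow> (((nat \<rightharpoonup> nat) \<Rightarrow> complex) \<Rightarrow> ((nat \<rightharpoonup> nat) \<Rightarrow> complex)) \<Rightarrow> bool" where
  "twisted_alg_iso r z w \<phi> \<longleftrightarrow>
     bij_betw \<phi> (rook_space r) (rook_space r) \<and>
     (\<forall>a\<in>rook_space r. \<forall>b\<in>rook_space r. \<phi> (\<lambda>d. a d + b d) = (\<lambda>d. \<phi> a d + \<phi> b d)) \<and>
     (\<forall>c. \<forall>a\<in>rook_space r. \<phi> (\<lambda>d. c * a d) = (\<lambda>d. c * \<phi> a d)) \<and>
     (\<forall>a\<in>rook_space r. \<forall>b\<in>rook_space r.
        \<phi> (twisted_mult r z a b) = twisted_mult r w (\<phi> a) (\<phi> b)) \<and>
     \<phi> (basis_elt (rook_id r)) = basis_elt (rook_id r)"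

end

theory Submission
  imports Defs
begin

lemma rook_fin:
  assumes "d \<in> rook r"
  shows "finite (dom d)" "finite (ran d)" "card (dom d) \<le> r" "card (ran d) = card (dom d)"
proof -
  have s: "dom d \<subseteq> {1..r}" "ran d \<subseteq> {1..r}" "inj_on d (dom d)"
    using assms by (auto simp: rook_def)
  show "finite (dom d)" "finite (ran d)" using s finite_subset by blast+
  show "card (dom d) \<le> r" using s(1) card_mono[of "{1..r}" "dom d"] by simp
  define g where "g x = the (d x)" for x
  have inj: "inj_on g (dom d)" using s(3) unfolding g_def inj_on_def
    by (metis domD option.sel)
  have "g ` dom d = ran d" unfolding g_def ran_def dom_def by force
  then show "card (ran d) = card (dom d)" using card_image[OF inj] by simp
qed

lemma key_term:
  fixes z :: complex
  assumes d1: "d1 \<in> rook r" and d2: "d2 \<in> rook r"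
  shows "z ^ (r - card (dom (rcomp d1 d2))) * z ^ rook_N r d1 d2
       = z ^ (r - card (dom d1)) * z ^ (r - card (dom d2))"
proof -
  note f1 = rook_fin[OF d1] and f2 = rook_fin[OF d2]
  have s: "ran d1 \<subseteq> {1..r}" "dom d2 \<subseteq> {1..r}" "inj_on d1 (dom d1)"
    using d1 d2 by (auto simp: rook_def)
  define g where "g x = the (d1 x)" for x
  have inj: "inj_on g (dom d1)" using s(3) unfolding g_def inj_on_def
    by (metis domD option.sel)
  have dc: "dom (rcomp d1 d2) = {x \<in> dom d1. g x \<in> dom d2}"
    unfolding rcomp_def g_def dom_def map_comp_def by (auto split: option.splits)
  have "g ` {x \<in> dom d1. g x \<in> dom d2} = ran d1 \<inter> dom d2"
    unfolding g_def ran_def dom_def by force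
  moreover have "inj_on g {x \<in> dom d1. g x \<in> dom d2}" by (rule inj_on_subset[OF inj]) auto
  ultimately have k: "card (dom (rcomp d1 d2)) = card (ran d1 \<inter> dom d2)"
    using dc card_image by metis
  have u: "card (ran d1 \<union> dom d2) + card (ran d1 \<inter> dom d2) = card (ran d1) + card (dom d2)"
    using card_Un_Int[OF f1(2) f2(1)] by simp
  have ule: "card (ran d1 \<union> dom d2) \<le> r"
    using s card_mono[of "{1..r}" "ran d1 \<union> dom d2"] by simp
  have i1: "card (ran d1 \<inter> dom d2) \<le> card (ran d1)" by (rule card_mono[OF f1(2)]) auto
  have i2: "card (ran d1 \<inter> dom d2) \<le> card (dom d2)" by (rule card_mono[OF f2(1)]) auto
  have "(r - card (dom (rcomp d1 d2))) + rook_N r d1 d2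
       = (r - card (dom d1)) + (r - card (dom d2))"
    unfolding rook_N_def k using u ule i1 i2 f1 f2 by linarith
  then show ?thesis by (metis power_add)
qed

theorem corollary8p7:
  fixes r :: nat and z :: complex
  assumes "r \<ge> 1" and "z \<noteq> 0"
  shows "(\<exists>\<phi>. twisted_alg_iso r z 1 \<phi>) \<and>
         (\<forall>a\<in>rook_space r. \<forall>b\<in>rook_space r. twisted_mult r 1 a b = rook_alg_mult r a b)"
proof
  define \<phi> where "\<phi> a = (\<lambda>d. z ^ (r - card (dom d)) * a d)" for a :: "(nat \<rightharpoonup> nat) \<Rightarrow> complex"
  define \<psi> where "\<psi> a = (\<lambda>d. a d / z ^ (r - card (dom d)))" for a :: "(nat \<rightharpoonup> nat) \<Rightarrow> complex"
  have bij: "bij_betw \<phi> (rook_space r) (rook_space r)"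
    by (rule bij_betw_byWitness[where f'=\<psi>])
       (auto simp: \<phi>_def \<psi>_def rook_space_def assms(2))
  have mult: "\<phi> (twisted_mult r z a b) = twisted_mult r 1 (\<phi> a) (\<phi> b)" for a b
  proof
    fix d
    have "\<phi> (twisted_mult r z a b) d = (\<Sum>d1\<in>rook r. \<Sum>d2\<in>rook r.
      (if rcomp d1 d2 = d then z ^ (r - card (dom d)) * z ^ rook_N r d1 d2 * a d1 * b d2 else 0))"
      unfolding \<phi>_def twisted_mult_def by (simp add: sum_distrib_left mult.assoc if_distrib cong: if_cong)
    also have "\<dots> = twisted_mult r 1 (\<phi> a) (\<phi> b) d"
      unfolding twisted_mult_def \<phi>_def
    proof (intro sum.cong refl)
      fix d1 d2 assume "d1 \<in> rook r" "d2 \<in> rook r"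
      from key_term[OF this, of z] show
        "(if rcomp d1 d2 = d then z ^ (r - card (dom d)) * z ^ rook_N r d1 d2 * a d1 * b d2 else 0)
         = (if rcomp d1 d2 = d then 1 ^ rook_N r d1 d2 * (z ^ (r - card (dom d1)) * a d1)
              * (z ^ (r - card (dom d2)) * b d2) else 0)"
        by (auto simp: mult_ac)
    qed
    finally show "\<phi> (twisted_mult r z a b) d = twisted_mult r 1 (\<phi> a) (\<phi> b) d" .
  qed
  have idc: "card (dom (rook_id r)) = r"
  proof -
    have "dom (rook_id r) = {1..r}" unfolding rook_id_def dom_def by auto
    then show ?thesis by simp
  qed
  have unit: "\<phi> (basis_elt (rook_id r)) = basis_elt (rook_id r)"
    unfolding \<phi>_def basis_elt_def using idc by auto
  show "\<exists>\<phi>. twisted_alg_iso r z 1 \<phi>"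
    unfolding twisted_alg_iso_def
    by (rule exI[of _ \<phi>]) (simp add: bij mult unit, simp add: \<phi>_def algebra_simps)
next
  show "\<forall>a\<in>rook_space r. \<forall>b\<in>rook_space r. twisted_mult r 1 a b = rook_alg_mult r a b"
    unfolding twisted_mult_def rook_alg_mult_def
    apply (rule ballI)+
    apply (rule ext)
    apply (rule sum.cong, rule refl)+
    apply simp
    done
qed

end
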